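(* In the dual access model, any $(\varepsilon_1,\varepsilon_2)$-tolerant testing algorithm for uniformity over $[n]$ requires sample (query) complexity $\Omega\!\left(\frac{1}{(\varepsilon_2-\varepsilon_1)^2}\right)$; this lower bound holds even when $\varepsilon_1$ is required to be $\Omega(1)$.
   Context: Distributions are over $[n]=\{1,\dots,n\}$; $\mathcal{U}_n$ denotes the uniform distribution on $[n]$; $d_{TV}(D_1,D_2)=\frac12\sum_{i\in[n]}|D_1(i)-D_2(i)|$. In the dual access model, an algorithm accesses an unknown distribution $D$ via a sampling oracle $\mathsf{SAMP}_D$ (returns $i\in[n]$ with probability $D(i)$, independently of all previous calls) and an evaluation oracle $\mathsf{EVAL}_D$ (on query $j\in[n]$ returns $D(j)$); each call counts as one query. An $(\varepsilon_1,\varepsilon_2)$-tolerant tester for uniformity, for $0\le\varepsilon_1<\varepsilon_2\le1$, outputs ACCEPT with probability at least $2/3$ if $d_{TV}(D,\mathcal{U}_n)\le\varepsilon_1$ and REJECT with probability at least $2/3$ if $d_{TV}(D,\mathcal{U}_n)\ge\varepsilon_2$. *)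

theory Defs
  imports "HOL-Probability.Probability"
begin

definition is_dist_on :: "nat \<Rightarrow> nat pmf \<Rightarrow> bool" where
  "is_dist_on n D \<longleftrightarrow> set_pmf D \<subseteq> {1..n}"

definition unif :: "nat \<Rightarrow> nat pmf" where
  "unif n = pmf_of_set {1..n}"

definition dtv :: "nat \<Rightarrow> nat pmf \<Rightarrow> nat pmf \<Rightarrow> real" where
  "dtv n D1 D2 = (1/2) * (\<Sum>i\<in>{1..n}. \<bar>pmf D1 i - pmf D2 i\<bar>)"

datatype query = Samp | Eval nat

datatype answer = SampAns nat | EvalAns real

type_synonym history = "(query \<times> answer) list"

text \<open>A (randomized, adaptive) algorithm: given the history of query/answer
pairs so far, it randomly chooses the next query; after the query budget is
exhausted it randomly decides (True = ACCEPT, False = REJECT).\<close>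
record algorithm =
  next_query :: "history \<Rightarrow> query pmf"
  decide :: "history \<Rightarrow> bool pmf"

fun run :: "nat pmf \<Rightarrow> algorithm \<Rightarrow> nat \<Rightarrow> history \<Rightarrow> bool pmf" where
  "run D A 0 h = decide A h"
| "run D A (Suc k) h =
     bind_pmf (next_query A h) (\<lambda>qu. case qu of
        Samp \<Rightarrow> bind_pmf D (\<lambda>i. run D A k (h @ [(Samp, SampAns i)]))
      | Eval j \<Rightarrow> run D A k (h @ [(Eval j, EvalAns (pmf D j))]))"

definition accept_prob :: "algorithm \<Rightarrow> nat \<Rightarrow> nat pmf \<Rightarrow> real" where
  "accept_prob A q D = pmf (run D A q []) True"

definition tolerant_unif_tester ::
  "algorithm \<Rightarrow> nat \<Rightarrow> nat \<Rightarrow> real \<Rightarrow> real \<Rightarrow> bool" where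
  "tolerant_unif_tester A q n eps1 eps2 \<longleftrightarrow>
     (\<forall>D. is_dist_on n D \<longrightarrow>
        (dtv n D (unif n) \<le> eps1 \<longrightarrow> accept_prob A q D \<ge> 2/3) \<and>
        (dtv n D (unif n) \<ge> eps2 \<longrightarrow> 1 - accept_prob A q D \<ge> 2/3))"

end

theory Submission
  imports Defs
begin

definition dep :: "((nat \<Rightarrow> bool) \<Rightarrow> real) \<Rightarrow> nat set \<Rightarrow> bool" where
  "dep L T \<longleftrightarrow> (\<forall>\<theta> \<theta>'. (\<forall>j\<in>T. \<theta> j = \<theta>' j) \<longrightarrow> L \<theta> = L \<theta>')"

lemma depD: "dep L T \<Longrightarrow> (\<And>j. j \<in> T \<Longrightarrow> \<theta> j = \<theta>' j) \<Longrightarrow> L \<theta> = L \<theta>'"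
  unfolding dep_def by blast

definition PP :: "nat set \<Rightarrow> real \<Rightarrow> (nat \<Rightarrow> bool) pmf" where
  "PP T p = Pi_pmf T False (\<lambda>_. bernoulli_pmf p)"

definition EE :: "nat set \<Rightarrow> real \<Rightarrow> ((nat \<Rightarrow> bool) \<Rightarrow> real) \<Rightarrow> real" where
  "EE T p F = measure_pmf.expectation (PP T p) F"

definition SS :: "nat set \<Rightarrow> (nat \<Rightarrow> bool) set" where
  "SS T = PiE_dflt T False (\<lambda>_. UNIV)"

lemma finite_SS: "finite T \<Longrightarrow> finite (SS T)"
  unfolding SS_def by (intro finite_PiE_dflt) auto

lemma set_PP: "finite T \<Longrightarrow> set_pmf (PP T p) \<subseteq> SS T"
  unfolding PP_def SS_def using set_Pi_pmf_subset'[of T False] by (auto simp: PiE_dflt_def)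

lemma finite_set_PP: "finite T \<Longrightarrow> finite (set_pmf (PP T p))"
  by (rule finite_subset[OF set_PP finite_SS])

lemma integrable_PP[simp]: "finite T \<Longrightarrow> integrable (measure_pmf (PP T p)) (f :: _ \<Rightarrow> real)"
  by (rule integrable_measure_pmf_finite, rule finite_set_PP)

lemma EE_sum_rep: "finite T \<Longrightarrow> EE T p F = (\<Sum>f\<in>SS T. pmf (PP T p) f * F f)"
  unfolding EE_def
proof -
  assume T: "finite T"
  have "(\<integral>x. F x \<partial>measure_pmf (PP T p)) = (\<Sum>a\<in>SS T. F a * pmf (PP T p) a)"
  proof (rule integral_measure_pmf_real)
    show "finite (SS T)" using T by (rule finite_SS)
    fix a assume "a \<in> set_pmf (PP T p)"
    thus "a \<in> SS T" using set_PP[OF T] by (rule subsetD[rotated])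
  qed
  thus "(\<integral>x. F x \<partial>measure_pmf (PP T p)) = (\<Sum>f\<in>SS T. pmf (PP T p) f * F f)"
    by (simp add: mult.commute)
qed

lemma pmf_PP: "finite T \<Longrightarrow> f \<in> SS T \<Longrightarrow> pmf (PP T p) f = (\<Prod>j\<in>T. pmf (bernoulli_pmf p) (f j))"
proof -
  assume T: "finite T" and f: "f \<in> SS T"
  have "\<forall>x. x \<notin> T \<longrightarrow> f x = False" using f unfolding SS_def PiE_dflt_def by blast
  thus ?thesis unfolding PP_def using pmf_Pi[OF T, of False "\<lambda>_. bernoulli_pmf p" f] by simp
qed

lemma EE_marg:
  assumes "finite U" "T \<subseteq> U" "dep L T"
  shows "EE U p L = EE T p L"
proof -
  have "PP T p = map_pmf (\<lambda>f x. if x \<in> T then f x else False) (PP U p)"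
    unfolding PP_def by (rule Pi_pmf_subset[OF assms(1,2)])
  hence "EE T p L = measure_pmf.expectation (PP U p) (\<lambda>f. L (\<lambda>x. if x \<in> T then f x else False))"
    unfolding EE_def by (simp only: integral_map_pmf)
  also have "\<dots> = EE U p L" unfolding EE_def
  proof (intro Bochner_Integration.integral_cong refl)
    fix f :: "nat \<Rightarrow> bool"
    show "L (\<lambda>x. if x \<in> T then f x else False) = L f"
      by (rule depD[OF assms(3)]) simp
  qed
  finally show ?thesis by (rule sym)
qed

lemma EE_add: "finite T \<Longrightarrow> EE T p (\<lambda>x. F x + G x) = EE T p F + EE T p G"
  unfolding EE_def by (simp add: Bochner_Integration.integral_add)
lemma EE_diff: "finite T \<Longrightarrow> EE T p (\<lambda>x. F x - G x) = EE T p F - EE T p G"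
  unfolding EE_def by (simp add: Bochner_Integration.integral_diff)
lemma EE_cmult: "EE T p (\<lambda>x. c * F x) = c * EE T p F"
  unfolding EE_def by simp
lemma EE_sum: "finite T \<Longrightarrow> EE T p (\<lambda>x. \<Sum>i\<in>X. F i x) = (\<Sum>i\<in>X. EE T p (F i))"
  unfolding EE_def by (simp add: Bochner_Integration.integral_sum)
lemma EE_const: "EE T p (\<lambda>x. c) = c"
  unfolding EE_def by simp
lemma EE_nonneg: "(\<And>x. F x \<ge> 0) \<Longrightarrow> EE T p F \<ge> 0"
  unfolding EE_def by (simp add: Bochner_Integration.integral_nonneg)
lemma EE_cong: "finite T \<Longrightarrow> (\<And>x. x \<in> SS T \<Longrightarrow> F x = G x) \<Longrightarrow> EE T p F = EE T p G"
  unfolding EE_def by (intro integral_cong_AE) (use set_PP in \<open>auto simp: AE_measure_pmf_iff\<close>)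
lemma EE_mono: "finite T \<Longrightarrow> (\<And>x. F x \<le> G x) \<Longrightarrow> EE T p F \<le> EE T p G"
  unfolding EE_def by (intro integral_mono) auto


definition KK :: "real \<Rightarrow> real \<Rightarrow> real" where
  "KK p1 p2 = (1-p1)^2/(1-p2) + p1^2/p2"
definition rr :: "real \<Rightarrow> real \<Rightarrow> real" where
  "rr p1 p2 = p1^2/(p2 * KK p1 p2)"

lemma KK_eq: "0 < p2 \<Longrightarrow> p2 < 1 \<Longrightarrow> KK p1 p2 = 1 + (p1 - p2)^2/(p2*(1-p2))"
  unfolding KK_def by (simp add: field_simps power2_eq_square)

lemma KK_ge1: "0 < p2 \<Longrightarrow> p2 < 1 \<Longrightarrow> KK p1 p2 \<ge> 1"
  by (simp add: KK_eq)

lemma rr_bounds: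
  assumes "0 < p2" "p2 < 1"
  shows "0 \<le> rr p1 p2" "rr p1 p2 \<le> 1"
proof -
  have K: "KK p1 p2 \<ge> 1" using KK_ge1 assms by blast
  show "0 \<le> rr p1 p2" unfolding rr_def using K assms by simp
  have "p1^2/p2 \<le> KK p1 p2" unfolding KK_def using assms by simp
  hence "p1^2 \<le> p2 * KK p1 p2" using assms by (simp add: divide_le_eq mult.commute)
  thus "rr p1 p2 \<le> 1" unfolding rr_def using K assms by simp
qed

lemma bern_ratio:
  assumes "0 \<le> p1" "p1 \<le> 1" "0 < p2" "p2 < 1"
  shows "(pmf (bernoulli_pmf p1) b)^2 / pmf (bernoulli_pmf p2) b = KK p1 p2 * pmf (bernoulli_pmf (rr p1 p2)) b"
proof -
  have K: "KK p1 p2 \<ge> 1" using KK_ge1 assms by blast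
  note r = rr_bounds[OF assms(3,4), of p1]
  show ?thesis
  proof (cases b)
    case True thus ?thesis using assms K r by (simp add: rr_def)
  next
    case False
    have "KK p1 p2 * (1 - rr p1 p2) = KK p1 p2 - p1^2/p2" unfolding rr_def using K assms
      by (simp add: field_simps)
    also have "\<dots> = (1-p1)^2/(1-p2)" unfolding KK_def by simp
    finally show ?thesis using assms K r False by simp
  qed
qed

lemma amgm_step:
  fixes w1 w2 t :: real
  assumes "w2 > 0" "t > 0"
  shows "\<bar>w1 - w2\<bar> \<le> (w1^2/w2 - 2*w1 + w2)/(2*t) + t*w2/2"
proof -
  define x where "x = w1 - w2"
  have e: "w1^2/w2 - 2*w1 + w2 = x^2/w2" unfolding x_def using assms
    by (simp add: field_simps power2_eq_square)
  have "0 \<le> (\<bar>x\<bar> - t*w2)^2" by simp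
  hence "2*t*w2*\<bar>x\<bar> \<le> x^2 + (t*w2)^2" by (simp add: power2_eq_square algebra_simps)
  hence "\<bar>x\<bar> \<le> (x^2 + (t*w2)^2)/(2*t*w2)" using assms by (simp add: le_divide_eq mult.commute mult.left_commute)
  also have "\<dots> = x^2/w2/(2*t) + t*w2/2" using assms by (simp add: field_simps power2_eq_square)
  finally show ?thesis unfolding e x_def[symmetric] .
qed


lemma bern_pos: "0 < p \<Longrightarrow> p < 1 \<Longrightarrow> pmf (bernoulli_pmf p) b > 0"
  by (cases b) simp_all

lemma base_bound:
  assumes T: "finite T" and L: "\<And>x. L x \<ge> 0"
    and p: "0 \<le> p1" "p1 \<le> 1" "0 < p2" "p2 < 1" and t: "t > 0"
  shows "\<bar>EE T p1 L - EE T p2 L\<bar> \<le>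
     (KK p1 p2 ^ card T * EE T (rr p1 p2) L - 2 * EE T p1 L + EE T p2 L)/(2*t) + t * EE T p2 L / 2"
proof -
  define w1 where "w1 f = pmf (PP T p1) f" for f
  define w2 where "w2 f = pmf (PP T p2) f" for f
  define w3 where "w3 f = pmf (PP T (rr p1 p2)) f" for f
  define c where "c = KK p1 p2 ^ card T"
  have pos: "w2 f > 0" if f: "f \<in> SS T" for f
    unfolding w2_def pmf_PP[OF T f] using p by (intro prod_pos) (simp add: bern_pos)
  have ratio: "(w1 f)^2 / w2 f = c * w3 f" if f: "f \<in> SS T" for f
  proof -
    have "(w1 f)^2 / w2 f = (\<Prod>j\<in>T. (pmf (bernoulli_pmf p1) (f j))^2 / pmf (bernoulli_pmf p2) (f j))"
      unfolding w1_def w2_def pmf_PP[OF T f] by (simp add: prod_power_distrib prod_dividef)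
    also have "\<dots> = (\<Prod>j\<in>T. KK p1 p2 * pmf (bernoulli_pmf (rr p1 p2)) (f j))"
      by (intro prod.cong refl bern_ratio p)
    also have "\<dots> = c * w3 f" unfolding c_def w3_def pmf_PP[OF T f] by (simp add: prod.distrib)
    finally show ?thesis .
  qed
  have pw: "\<bar>w1 f - w2 f\<bar> * L f \<le> ((c * w3 f - 2 * w1 f + w2 f)/(2*t) + t * w2 f / 2) * L f"
    if f: "f \<in> SS T" for f
    using amgm_step[OF pos[OF f] t, of "w1 f"] ratio[OF f] L[of f] by (intro mult_right_mono) auto
  have "\<bar>EE T p1 L - EE T p2 L\<bar> = \<bar>\<Sum>f\<in>SS T. (w1 f - w2 f) * L f\<bar>"
    unfolding EE_sum_rep[OF T] w1_def w2_def by (simp add: sum_subtractf left_diff_distrib)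
  also have "\<dots> \<le> (\<Sum>f\<in>SS T. \<bar>w1 f - w2 f\<bar> * L f)"
    using sum_abs[of "\<lambda>f. (w1 f - w2 f) * L f" "SS T"] L by (simp add: abs_mult)
  also have "\<dots> \<le> (\<Sum>f\<in>SS T. ((c * w3 f - 2 * w1 f + w2 f)/(2*t) + t * w2 f / 2) * L f)"
    by (intro sum_mono pw)
  also have "\<dots> = (\<Sum>f\<in>SS T. (c * (w3 f * L f) - 2 * (w1 f * L f) + w2 f * L f)/(2*t) + t/2 * (w2 f * L f))"
    by (intro sum.cong refl) (simp add: field_simps)
  also have "\<dots> = (c * (\<Sum>f\<in>SS T. w3 f * L f) - 2 * (\<Sum>f\<in>SS T. w1 f * L f) + (\<Sum>f\<in>SS T. w2 f * L f))/(2*t)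
       + t/2 * (\<Sum>f\<in>SS T. w2 f * L f)"
    by (simp add: sum.distrib sum_divide_distrib[symmetric] sum_subtractf sum_distrib_left)
  also have "\<dots> = (KK p1 p2 ^ card T * EE T (rr p1 p2) L - 2 * EE T p1 L + EE T p2 L)/(2*t) + t * EE T p2 L / 2"
    unfolding EE_sum_rep[OF T] w1_def w2_def w3_def c_def by simp
  finally show ?thesis .
qed


lemma dep_mult: "dep L T \<Longrightarrow> dep l C \<Longrightarrow> dep (\<lambda>\<theta>. L \<theta> * l \<theta>) (T \<union> C)"
  unfolding dep_def by (metis UnCI)

lemma integrable_pmf_bounded:
  fixes f :: "'a \<Rightarrow> real"
  assumes "\<And>x. \<bar>f x\<bar> \<le> B"
  shows "integrable (measure_pmf M) f"
  by (rule measure_pmf.integrable_const_bound[where B=B]) (use assms in auto)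

lemma abs_integral_pmf_le:
  fixes f :: "'a \<Rightarrow> real"
  assumes "\<And>x. \<bar>f x\<bar> \<le> B"
  shows "\<bar>\<integral>x. f x \<partial>measure_pmf M\<bar> \<le> B"
proof -
  have "\<bar>\<integral>x. f x \<partial>measure_pmf M\<bar> \<le> (\<integral>x. \<bar>f x\<bar> \<partial>measure_pmf M)"
    using integral_norm_bound[of "measure_pmf M" f] by simp
  also have "\<dots> \<le> (\<integral>x. B \<partial>measure_pmf M)"
    by (rule integral_mono) (use assms integrable_pmf_bounded[where B=B] in \<open>auto intro: integrable_pmf_bounded[where B=B]\<close>)
  finally have "\<bar>\<integral>x. f x \<partial>measure_pmf M\<bar> \<le> (\<integral>x. B \<partial>measure_pmf M)" .
  thus ?thesis by simp
qed

lemma EE_fubini: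
  fixes G :: "(nat \<Rightarrow> bool) \<Rightarrow> 'q \<Rightarrow> real"
  assumes U: "finite U" and G: "\<And>x y. \<bar>G x y\<bar> \<le> 1"
  shows "EE U p (\<lambda>\<theta>. L \<theta> * (\<integral>y. G \<theta> y \<partial>measure_pmf M)) = (\<integral>y. EE U p (\<lambda>\<theta>. L \<theta> * G \<theta> y) \<partial>measure_pmf M)"
proof -
  have int: "integrable (measure_pmf M) (\<lambda>y. pmf (PP U p) f * (L f * G f y))" for f
    by (intro integrable_mult_right integrable_pmf_bounded[where B=1] G)
  have "EE U p (\<lambda>\<theta>. L \<theta> * (\<integral>y. G \<theta> y \<partial>measure_pmf M))
      = (\<Sum>f\<in>SS U. (\<integral>y. pmf (PP U p) f * (L f * G f y) \<partial>measure_pmf M))"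
    unfolding EE_sum_rep[OF U] by simp
  also have "\<dots> = (\<integral>y. (\<Sum>f\<in>SS U. pmf (PP U p) f * (L f * G f y)) \<partial>measure_pmf M)"
    using Bochner_Integration.integral_sum[where I="SS U" and M="measure_pmf M" and f="\<lambda>f y. pmf (PP U p) f * (L f * G f y)"] int
    by simp
  also have "\<dots> = (\<integral>y. EE U p (\<lambda>\<theta>. L \<theta> * G \<theta> y) \<partial>measure_pmf M)"
    unfolding EE_sum_rep[OF U] ..
  finally show ?thesis .
qed


locale LB =
  fixes m :: nat and D :: "(nat \<Rightarrow> bool) \<Rightarrow> nat pmf" and I :: "nat set" and V :: "real set"
    and coord :: "nat \<Rightarrow> nat set" and p1 p2 t :: real and A :: algorithm
  assumes I: "finite I" and supp: "\<And>\<theta>. set_pmf (D \<theta>) \<subseteq> I"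
    and V: "finite V" and vals: "\<And>\<theta> j. pmf (D \<theta>) j \<in> V"
    and coord_sub: "\<And>i. coord i \<subseteq> {..<m}" and coord_card: "\<And>i. card (coord i) \<le> 1"
    and coord_dep: "\<And>i. dep (\<lambda>\<theta>. pmf (D \<theta>) i) (coord i)"
    and p: "0 \<le> p1" "p1 \<le> 1" "0 < p2" "p2 < 1" and t: "t > 0"
begin

definition Acc :: "(nat \<Rightarrow> bool) \<Rightarrow> nat \<Rightarrow> history \<Rightarrow> real" where
  "Acc \<theta> k h = pmf (run (D \<theta>) A k h) True"

definition Bd :: "nat \<Rightarrow> nat set \<Rightarrow> ((nat \<Rightarrow> bool) \<Rightarrow> real) \<Rightarrow> real" where
  "Bd k T L = (KK p1 p2 ^ (k + card T) * EE {..<m} (rr p1 p2) L - 2 * EE {..<m} p1 L + EE {..<m} p2 L)/(2*t)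
      + t * EE {..<m} p2 L / 2"

lemma KK1: "KK p1 p2 \<ge> 1" using KK_ge1 p by blast

lemma rr01: "0 \<le> rr p1 p2" "rr p1 p2 \<le> 1" using rr_bounds p by blast+

lemma base_case:
  assumes T: "T \<subseteq> {..<m}" and dL: "dep L T" and L: "\<And>x. L x \<ge> 0"
  shows "\<bar>EE {..<m} p1 (\<lambda>\<theta>. L \<theta> * Acc \<theta> 0 h) - EE {..<m} p2 (\<lambda>\<theta>. L \<theta> * Acc \<theta> 0 h)\<bar> \<le> Bd 0 T L"
proof -
  define g where "g = pmf (decide A h) True"
  have g: "0 \<le> g" "g \<le> 1" unfolding g_def by (simp_all add: pmf_le_1)
  have fT: "finite T" using T finite_subset by blast
  have e: "EE {..<m} p (\<lambda>\<theta>. L \<theta> * Acc \<theta> 0 h) = g * EE {..<m} p L" for p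
    unfolding Acc_def g_def using EE_cmult[of "{..<m}" p "pmf (decide A h) True" L] by (simp add: mult.commute)
  have "\<bar>EE {..<m} p1 (\<lambda>\<theta>. L \<theta> * Acc \<theta> 0 h) - EE {..<m} p2 (\<lambda>\<theta>. L \<theta> * Acc \<theta> 0 h)\<bar>
      = g * \<bar>EE {..<m} p1 L - EE {..<m} p2 L\<bar>" unfolding e using g
    by (simp add: right_diff_distrib[symmetric] abs_mult)
  also have "\<dots> \<le> \<bar>EE {..<m} p1 L - EE {..<m} p2 L\<bar>" using g by (simp add: mult_left_le_one_le)
  also have "\<dots> = \<bar>EE T p1 L - EE T p2 L\<bar>" using EE_marg[OF _ T dL] by simp
  also have "\<dots> \<le> (KK p1 p2 ^ card T * EE T (rr p1 p2) L - 2 * EE T p1 L + EE T p2 L)/(2*t) + t * EE T p2 L / 2"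
    by (rule base_bound[OF fT L p t])
  also have "\<dots> = Bd 0 T L" unfolding Bd_def using EE_marg[OF _ T dL] by simp
  finally show ?thesis .
qed

lemma Bd_expand: "Bd k T L = (KK p1 p2 ^ (k + card T) * EE {..<m} (rr p1 p2) L - 2 * EE {..<m} p1 L + EE {..<m} p2 L)/(2*t)
      + t * EE {..<m} p2 L / 2" by (simp add: Bd_def)

lemma sum_step:
  fixes X :: "'x set" and l H :: "'x \<Rightarrow> (nat \<Rightarrow> bool) \<Rightarrow> real" and c :: "'x \<Rightarrow> nat set"
  assumes X: "finite X" and T: "T \<subseteq> {..<m}" and L: "\<And>x. L x \<ge> 0"
    and lnn: "\<And>x \<theta>. l x \<theta> \<ge> 0" and lsum: "\<And>\<theta>. (\<Sum>x\<in>X. l x \<theta>) = 1"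
    and csub: "\<And>x. c x \<subseteq> {..<m}" and ccard: "\<And>x. card (c x) \<le> 1"
    and IH: "\<And>x. x \<in> X \<Longrightarrow> \<bar>EE {..<m} p1 (\<lambda>\<theta>. (L \<theta> * l x \<theta>) * H x \<theta>) - EE {..<m} p2 (\<lambda>\<theta>. (L \<theta> * l x \<theta>) * H x \<theta>)\<bar>
                      \<le> Bd k (T \<union> c x) (\<lambda>\<theta>. L \<theta> * l x \<theta>)"
  shows "\<bar>EE {..<m} p1 (\<lambda>\<theta>. L \<theta> * (\<Sum>x\<in>X. l x \<theta> * H x \<theta>)) - EE {..<m} p2 (\<lambda>\<theta>. L \<theta> * (\<Sum>x\<in>X. l x \<theta> * H x \<theta>))\<bar>
         \<le> Bd (Suc k) T L"
proof -
  let ?U = "{..<m}"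
  have fU: "finite ?U" by simp
  define K where "K = KK p1 p2"
  have K1: "K \<ge> 1" unfolding K_def by (rule KK1)
  have fT: "finite T" using T finite_subset by blast
  have ex: "EE ?U p (\<lambda>\<theta>. L \<theta> * (\<Sum>x\<in>X. l x \<theta> * H x \<theta>)) = (\<Sum>x\<in>X. EE ?U p (\<lambda>\<theta>. (L \<theta> * l x \<theta>) * H x \<theta>))" for p
    using EE_sum[OF fU, where p=p and X=X and F="\<lambda>x \<theta>. (L \<theta> * l x \<theta>) * H x \<theta>"]
    by (simp add: sum_distrib_left mult.assoc)
  have el: "(\<Sum>x\<in>X. EE ?U p (\<lambda>\<theta>. L \<theta> * l x \<theta>)) = EE ?U p L" for p
  proof -
    have "(\<Sum>x\<in>X. EE ?U p (\<lambda>\<theta>. L \<theta> * l x \<theta>)) = EE ?U p (\<lambda>\<theta>. \<Sum>x\<in>X. L \<theta> * l x \<theta>)"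
      using EE_sum[OF fU, where p=p and X=X and F="\<lambda>x \<theta>. L \<theta> * l x \<theta>"] by simp
    also have "\<dots> = EE ?U p L" by (simp add: sum_distrib_left[symmetric] lsum)
    finally show ?thesis .
  qed
  have pow: "K ^ (k + card (T \<union> c x)) \<le> K ^ (Suc k + card T)" for x
  proof -
    have "card (T \<union> c x) \<le> card T + card (c x)" by (rule card_Un_le)
    also have "\<dots> \<le> card T + 1" using ccard[of x] by simp
    finally have "k + card (T \<union> c x) \<le> Suc k + card T" by simp
    thus ?thesis using K1 by (rule power_increasing)
  qed
  have bx: "Bd k (T \<union> c x) (\<lambda>\<theta>. L \<theta> * l x \<theta>) \<le>
      (K ^ (Suc k + card T) * EE ?U (rr p1 p2) (\<lambda>\<theta>. L \<theta> * l x \<theta>) - 2 * EE ?U p1 (\<lambda>\<theta>. L \<theta> * l x \<theta>)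
        + EE ?U p2 (\<lambda>\<theta>. L \<theta> * l x \<theta>))/(2*t) + t * EE ?U p2 (\<lambda>\<theta>. L \<theta> * l x \<theta>) / 2" for x
  proof -
    have nn: "EE ?U (rr p1 p2) (\<lambda>\<theta>. L \<theta> * l x \<theta>) \<ge> 0" using L lnn by (intro EE_nonneg) simp
    have "K ^ (k + card (T \<union> c x)) * EE ?U (rr p1 p2) (\<lambda>\<theta>. L \<theta> * l x \<theta>)
         \<le> K ^ (Suc k + card T) * EE ?U (rr p1 p2) (\<lambda>\<theta>. L \<theta> * l x \<theta>)"
      using pow[of x] nn by (rule mult_right_mono)
    thus ?thesis unfolding Bd_def K_def using t by (simp add: divide_right_mono)
  qed
  have "\<bar>EE ?U p1 (\<lambda>\<theta>. L \<theta> * (\<Sum>x\<in>X. l x \<theta> * H x \<theta>)) - EE ?U p2 (\<lambda>\<theta>. L \<theta> * (\<Sum>x\<in>X. l x \<theta> * H x \<theta>))\<bar>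
     = \<bar>\<Sum>x\<in>X. EE ?U p1 (\<lambda>\<theta>. (L \<theta> * l x \<theta>) * H x \<theta>) - EE ?U p2 (\<lambda>\<theta>. (L \<theta> * l x \<theta>) * H x \<theta>)\<bar>"
    unfolding ex by (simp add: sum_subtractf)
  also have "\<dots> \<le> (\<Sum>x\<in>X. \<bar>EE ?U p1 (\<lambda>\<theta>. (L \<theta> * l x \<theta>) * H x \<theta>) - EE ?U p2 (\<lambda>\<theta>. (L \<theta> * l x \<theta>) * H x \<theta>)\<bar>)"
    by (rule sum_abs)
  also have "\<dots> \<le> (\<Sum>x\<in>X. Bd k (T \<union> c x) (\<lambda>\<theta>. L \<theta> * l x \<theta>))"
    by (intro sum_mono IH)
  also have "\<dots> \<le> (\<Sum>x\<in>X. (K ^ (Suc k + card T) * EE ?U (rr p1 p2) (\<lambda>\<theta>. L \<theta> * l x \<theta>) - 2 * EE ?U p1 (\<lambda>\<theta>. L \<theta> * l x \<theta>)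
        + EE ?U p2 (\<lambda>\<theta>. L \<theta> * l x \<theta>))/(2*t) + t * EE ?U p2 (\<lambda>\<theta>. L \<theta> * l x \<theta>) / 2)"
    by (intro sum_mono bx)
  also have "\<dots> = (K ^ (Suc k + card T) * (\<Sum>x\<in>X. EE ?U (rr p1 p2) (\<lambda>\<theta>. L \<theta> * l x \<theta>))
        - 2 * (\<Sum>x\<in>X. EE ?U p1 (\<lambda>\<theta>. L \<theta> * l x \<theta>))
        + (\<Sum>x\<in>X. EE ?U p2 (\<lambda>\<theta>. L \<theta> * l x \<theta>)))/(2*t) + t * (\<Sum>x\<in>X. EE ?U p2 (\<lambda>\<theta>. L \<theta> * l x \<theta>)) / 2"
    by (simp add: sum.distrib sum_divide_distrib[symmetric] sum_subtractf sum_distrib_left)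
  also have "\<dots> = Bd (Suc k) T L" unfolding el Bd_def K_def ..
  finally show ?thesis .
qed


lemma EE_abs_le:
  assumes "\<And>x. L x \<ge> 0" "\<And>x. \<bar>G x\<bar> \<le> 1"
  shows "\<bar>EE {..<m} p (\<lambda>\<theta>. L \<theta> * G \<theta>)\<bar> \<le> EE {..<m} p L"
proof -
  have a: "- L x \<le> L x * G x" "L x * G x \<le> L x" for x
  proof -
    have "\<bar>L x * G x\<bar> \<le> L x * 1" using assms[of x] by (simp add: abs_mult mult_left_le)
    thus "- L x \<le> L x * G x" "L x * G x \<le> L x" by linarith+
  qed
  have "EE {..<m} p (\<lambda>\<theta>. L \<theta> * G \<theta>) \<le> EE {..<m} p L" by (rule EE_mono) (auto intro: a)
  moreover have "EE {..<m} p (\<lambda>\<theta>. - L \<theta>) \<le> EE {..<m} p (\<lambda>\<theta>. L \<theta> * G \<theta>)" by (rule EE_mono) (auto intro: a)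
  moreover have "EE {..<m} p (\<lambda>\<theta>. - L \<theta>) = - EE {..<m} p L" using EE_cmult[of "{..<m}" p "-1" L] by simp
  ultimately show ?thesis by linarith
qed

lemma main:
  "T \<subseteq> {..<m} \<Longrightarrow> dep L T \<Longrightarrow> (\<And>x. L x \<ge> 0) \<Longrightarrow>
   \<bar>EE {..<m} p1 (\<lambda>\<theta>. L \<theta> * Acc \<theta> k h) - EE {..<m} p2 (\<lambda>\<theta>. L \<theta> * Acc \<theta> k h)\<bar> \<le> Bd k T L"
proof (induction k arbitrary: h T L)
  case 0 thus ?case by (rule base_case)
next
  case (Suc k)
  let ?U = "{..<m}"
  define G where "G \<theta> qu = pmf (case qu of Samp \<Rightarrow> bind_pmf (D \<theta>) (\<lambda>i. run (D \<theta>) A k (h @ [(Samp, SampAns i)]))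
      | Eval j \<Rightarrow> run (D \<theta>) A k (h @ [(Eval j, EvalAns (pmf (D \<theta>) j))])) True" for \<theta> qu
  have accS: "Acc \<theta> (Suc k) h = (\<integral>qu. G \<theta> qu \<partial>measure_pmf (next_query A h))" for \<theta>
    unfolding Acc_def G_def by (simp add: pmf_bind)
  have Gb: "\<bar>G \<theta> qu\<bar> \<le> 1" for \<theta> qu by (simp add: G_def pmf_le_1)
  have fub: "EE ?U p (\<lambda>\<theta>. L \<theta> * Acc \<theta> (Suc k) h) = (\<integral>qu. EE ?U p (\<lambda>\<theta>. L \<theta> * G \<theta> qu) \<partial>measure_pmf (next_query A h))" for p
    unfolding accS by (rule EE_fubini) (simp_all add: Gb)
  have IH': "\<bar>EE ?U p1 (\<lambda>\<theta>. (L \<theta> * l \<theta>) * Acc \<theta> k h') - EE ?U p2 (\<lambda>\<theta>. (L \<theta> * l \<theta>) * Acc \<theta> k h')\<bar>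
      \<le> Bd k (T \<union> C) (\<lambda>\<theta>. L \<theta> * l \<theta>)"
    if "C \<subseteq> ?U" "dep l C" "\<And>\<theta>. l \<theta> \<ge> 0" for C l h'
    by (rule Suc.IH) (use Suc.prems that in \<open>auto intro: dep_mult\<close>)
  have per: "\<bar>EE ?U p1 (\<lambda>\<theta>. L \<theta> * G \<theta> qu) - EE ?U p2 (\<lambda>\<theta>. L \<theta> * G \<theta> qu)\<bar> \<le> Bd (Suc k) T L" for qu
  proof (cases qu)
    case Samp
    have g: "G \<theta> qu = (\<Sum>i\<in>I. pmf (D \<theta>) i * Acc \<theta> k (h @ [(Samp, SampAns i)]))" for \<theta>
    proof -
      have "G \<theta> qu = (\<integral>i. Acc \<theta> k (h @ [(Samp, SampAns i)]) \<partial>measure_pmf (D \<theta>))"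
        unfolding G_def Samp Acc_def by (simp add: pmf_bind)
      also have "\<dots> = (\<Sum>i\<in>I. Acc \<theta> k (h @ [(Samp, SampAns i)]) * pmf (D \<theta>) i)"
      proof (rule integral_measure_pmf_real)
        show "finite I" by (rule I)
        fix a assume "a \<in> set_pmf (D \<theta>)" thus "a \<in> I" using supp by blast
      qed
      finally show ?thesis by (simp add: mult.commute)
    qed
    show ?thesis unfolding g
    proof (rule sum_step[where c=coord])
      show "finite I" by (rule I)
      show "(\<Sum>i\<in>I. pmf (D \<theta>) i) = 1" for \<theta> by (rule sum_pmf_eq_1[OF I supp])
    qed (use Suc.prems coord_sub coord_card coord_dep in \<open>auto intro!: IH'\<close>)
  next
    case (Eval j)
    have g: "G \<theta> qu = (\<Sum>v\<in>V. (if pmf (D \<theta>) j = v then 1 else 0) * Acc \<theta> k (h @ [(Eval j, EvalAns v)]))" for \<theta>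
    proof -
      have "G \<theta> qu = Acc \<theta> k (h @ [(Eval j, EvalAns (pmf (D \<theta>) j))])"
        unfolding G_def Eval Acc_def by simp
      also have "\<dots> = (\<Sum>v\<in>V. if pmf (D \<theta>) j = v then Acc \<theta> k (h @ [(Eval j, EvalAns v)]) else 0)"
        using vals[of \<theta> j] V by simp
      also have "\<dots> = (\<Sum>v\<in>V. (if pmf (D \<theta>) j = v then 1 else 0) * Acc \<theta> k (h @ [(Eval j, EvalAns v)]))"
        by (intro sum.cong refl) simp
      finally show ?thesis .
    qed
    have dv: "dep (\<lambda>\<theta>. if pmf (D \<theta>) j = v then 1 else 0) (coord j)" for v
      using coord_dep[of j] unfolding dep_def by metis
    have sv: "(\<Sum>v\<in>V. (if pmf (D \<theta>) j = v then 1 else 0::real)) = 1" for \<theta>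
      using vals[of \<theta> j] V by simp
    show ?thesis unfolding g
    proof (rule sum_step[where c="\<lambda>_. coord j"])
      show "finite V" by (rule V)
    qed (use Suc.prems coord_sub coord_card dv sv in \<open>auto intro!: IH'\<close>)
  qed
  have bnd: "\<bar>EE ?U p (\<lambda>\<theta>. L \<theta> * G \<theta> qu)\<bar> \<le> EE ?U p L" for p qu
    by (rule EE_abs_le) (use Suc.prems Gb in auto)
  have int: "integrable (measure_pmf (next_query A h)) (\<lambda>qu. EE ?U p (\<lambda>\<theta>. L \<theta> * G \<theta> qu))" for p
    by (rule integrable_pmf_bounded) (rule bnd)
  have "\<bar>EE ?U p1 (\<lambda>\<theta>. L \<theta> * Acc \<theta> (Suc k) h) - EE ?U p2 (\<lambda>\<theta>. L \<theta> * Acc \<theta> (Suc k) h)\<bar>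
      = \<bar>\<integral>qu. EE ?U p1 (\<lambda>\<theta>. L \<theta> * G \<theta> qu) - EE ?U p2 (\<lambda>\<theta>. L \<theta> * G \<theta> qu) \<partial>measure_pmf (next_query A h)\<bar>"
    unfolding fub by (simp add: Bochner_Integration.integral_diff[OF int int])
  also have "\<dots> \<le> Bd (Suc k) T L" by (rule abs_integral_pmf_le) (rule per)
  finally show ?case .
qed

end


definition val :: "nat \<Rightarrow> (nat \<Rightarrow> bool) \<Rightarrow> nat \<Rightarrow> real" where
  "val n \<theta> i = (if 1 \<le> i \<and> i \<le> 2 * (n div 2) then (if \<theta> ((i - 1) div 2) then (if odd i then 2/n else 0) else 1/n)
     else if 1 \<le> i \<and> i \<le> n then 1/n else 0)"

lemma sum_pairs: "(\<Sum>i\<in>{1..2*(m::nat)}. (f i :: real)) = (\<Sum>j<m. f (2*j+1) + f (2*j+2))"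
proof (induction m)
  case 0 thus ?case by simp
next
  case (Suc m)
  have e: "{1..2 * Suc m} = insert (2*m+2) (insert (2*m+1) {1..2*m})" by auto
  have "(\<Sum>i\<in>{1..2*Suc m}. f i) = f (2*m+2) + (f (2*m+1) + (\<Sum>i\<in>{1..2*m}. f i))"
    unfolding e by simp
  thus ?case using Suc by (simp add: algebra_simps)
qed

lemma split_n: "2 * ((n::nat) div 2) \<le> n \<Longrightarrow> (\<Sum>i\<in>{1..n}. f i) = (\<Sum>i\<in>{1..2*(n div 2)}. f i) + (\<Sum>i\<in>{2*(n div 2)+1..n}. f i)"
proof -
  assume h: "2 * (n div 2) \<le> n"
  have "{1..n} = {1..2*(n div 2)} \<union> {2*(n div 2)+1..n}" using h by auto
  moreover have "{1..2*(n div 2)} \<inter> {2*(n div 2)+1..n} = {}" by auto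
  ultimately show ?thesis by (simp add: sum.union_disjoint)
qed

lemma val_pair:
  assumes "j < n div 2"
  shows "val n \<theta> (2*j+1) = (if \<theta> j then 2/n else 1/n)" "val n \<theta> (2*j+2) = (if \<theta> j then 0 else 1/n)"
    "val n \<theta> (Suc (2*j)) = (if \<theta> j then 2/n else 1/n)" "val n \<theta> (Suc (Suc (2*j))) = (if \<theta> j then 0 else 1/n)"
  using assms unfolding val_def by auto

lemma val_tail: "2*(n div 2) + 1 \<le> i \<Longrightarrow> i \<le> n \<Longrightarrow> val n \<theta> i = 1/n"
  unfolding val_def by auto

lemma val_sum: "n > 0 \<Longrightarrow> (\<Sum>i\<in>{1..n}. val n \<theta> i) = 1"
proof -
  assume n: "n > 0"
  let ?m = "n div 2"
  have "(\<Sum>i\<in>{1..2*?m}. val n \<theta> i) = (\<Sum>j<?m. 2/n)"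
    unfolding sum_pairs by (intro sum.cong refl) (simp add: val_pair)
  moreover have "(\<Sum>i\<in>{2*?m+1..n}. val n \<theta> i) = (\<Sum>i\<in>{2*?m+1..n}. 1/n)"
    by (intro sum.cong refl) (simp add: val_tail)
  moreover have "card {2*?m+1..n} = n - 2*?m" by simp
  ultimately have "(\<Sum>i\<in>{1..n}. val n \<theta> i) = ?m * (2/n) + (n - 2*?m) * (1/n)"
    using split_n[of n "val n \<theta>"] by simp
  also have "\<dots> = (2*?m + (n - 2*?m)) / n" by (simp add: field_simps)
  also have "2*?m + (n - 2*?m) = n" by simp
  finally show ?thesis using n by simp
qed

lemma val_nonneg: "val n \<theta> i \<ge> 0" unfolding val_def by simp

definition DD :: "nat \<Rightarrow> (nat \<Rightarrow> bool) \<Rightarrow> nat pmf" where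
  "DD n \<theta> = embed_pmf (val n \<theta>)"

lemma pmf_DD: assumes "n > 0" shows "pmf (DD n \<theta>) i = val n \<theta> i"
proof -
  have "(\<integral>\<^sup>+x. ennreal (val n \<theta> x) \<partial>count_space UNIV) = (\<Sum>x\<in>{1..n}. ennreal (val n \<theta> x))"
    by (rule nn_integral_count_space') (auto simp: val_def)
  also have "\<dots> = ennreal (\<Sum>x\<in>{1..n}. val n \<theta> x)" by (rule sum_ennreal) (simp add: val_nonneg)
  also have "\<dots> = 1" using val_sum[OF assms] by simp
  finally have "(\<integral>\<^sup>+x. ennreal (val n \<theta> x) \<partial>count_space UNIV) = 1" .
  thus ?thesis unfolding DD_def by (intro pmf_embed_pmf) (simp_all add: val_nonneg)
qed

lemma set_DD: "n > 0 \<Longrightarrow> set_pmf (DD n \<theta>) \<subseteq> {1..n}"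
  by (auto simp: set_pmf_eq pmf_DD val_def split: if_splits)

definition Kc :: "nat \<Rightarrow> (nat \<Rightarrow> bool) \<Rightarrow> nat" where
  "Kc m \<theta> = card {j\<in>{..<m}. \<theta> j}"

lemma dtv_DD: assumes n: "n > 0" shows "dtv n (DD n \<theta>) (unif n) = Kc (n div 2) \<theta> / n"
proof -
  let ?m = "n div 2"
  have u: "pmf (unif n) i = 1/n" if "i \<in> {1..n}" for i
    unfolding unif_def using that n by (subst pmf_of_set) auto
  have "(\<Sum>i\<in>{1..n}. \<bar>pmf (DD n \<theta>) i - pmf (unif n) i\<bar>) = (\<Sum>i\<in>{1..n}. \<bar>val n \<theta> i - 1/n\<bar>)"
    by (intro sum.cong refl) (simp add: pmf_DD[OF n] u)
  also have "\<dots> = (\<Sum>i\<in>{1..2*?m}. \<bar>val n \<theta> i - 1/n\<bar>) + (\<Sum>i\<in>{2*?m+1..n}. \<bar>val n \<theta> i - 1/n\<bar>)"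
    by (rule split_n) simp
  also have "(\<Sum>i\<in>{2*?m+1..n}. \<bar>val n \<theta> i - 1/n\<bar>) = 0"
    by (intro sum.neutral) (simp add: val_tail)
  also have "(\<Sum>i\<in>{1..2*?m}. \<bar>val n \<theta> i - 1/n\<bar>) = (\<Sum>j<?m. if \<theta> j then 2/n else 0)"
    unfolding sum_pairs by (intro sum.cong refl) (simp add: val_pair)
  also have "\<dots> = (\<Sum>j\<in>{j\<in>{..<?m}. \<theta> j}. 2/n)"
    by (simp only: sum.inter_filter[OF finite_lessThan])
  also have "\<dots> = Kc ?m \<theta> * (2/n)" unfolding Kc_def by simp
  finally show ?thesis unfolding dtv_def by simp
qed


definition coordf :: "nat \<Rightarrow> nat \<Rightarrow> nat set" where
  "coordf n i = (if 1 \<le> i \<and> i \<le> 2*(n div 2) then {(i-1) div 2} else {})"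

lemma LB_inst:
  assumes n: "n > 0" and p: "0 \<le> p1" "p1 \<le> 1" "0 < p2" "p2 < 1" and t: "t > 0"
  shows "LB (n div 2) (DD n) {1..n} {0, 1/n, 2/n} (coordf n) p1 p2 t"
proof
  show "finite {1..n}" by simp
  show "set_pmf (DD n \<theta>) \<subseteq> {1..n}" for \<theta> by (rule set_DD[OF n])
  show "finite {0, 1/real n, 2/real n}" by simp
  show "pmf (DD n \<theta>) j \<in> {0, 1/real n, 2/real n}" for \<theta> j
    unfolding pmf_DD[OF n] val_def by auto
  show "coordf n i \<subseteq> {..<n div 2}" for i unfolding coordf_def by auto
  show "card (coordf n i) \<le> 1" for i unfolding coordf_def by auto
  show "dep (\<lambda>\<theta>. pmf (DD n \<theta>) i) (coordf n i)" for i
    unfolding dep_def pmf_DD[OF n] coordf_def val_def by auto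
qed (use p t in auto)

context LB begin
lemma main0: "\<bar>EE {..<m} p1 (\<lambda>\<theta>. Acc \<theta> q []) - EE {..<m} p2 (\<lambda>\<theta>. Acc \<theta> q [])\<bar>
   \<le> (KK p1 p2 ^ q - 1)/(2*t) + t/2"
  using main[of "{}" "\<lambda>_. 1" q "[]"] by (simp add: dep_def Bd_def EE_const)
lemma Acc_eq: "Acc \<theta> q [] = accept_prob A q (D \<theta>)"
  unfolding Acc_def accept_prob_def ..
end


lemma prob_Kc:
  assumes "0 \<le> p" "p \<le> 1"
  shows "measure_pmf.prob (PP {..<m} p) {\<theta>. P (Kc m \<theta>)} = measure_pmf.prob (binomial_pmf m p) {x. P x}"
proof -
  have "binomial_pmf m p = map_pmf (\<lambda>f. card {x\<in>{..<m}. f x}) (Pi_pmf {..<m} False (\<lambda>_. bernoulli_pmf p))"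
    by (rule binomial_pmf_altdef') (use assms in auto)
  hence "measure_pmf.prob (binomial_pmf m p) {x. P x} = measure_pmf.prob (PP {..<m} p) ((\<lambda>f. card {x\<in>{..<m}. f x}) -` {x. P x})"
    unfolding PP_def by simp
  also have "(\<lambda>f. card {x\<in>{..<m}. f x}) -` {x. P x} = {\<theta>. P (Kc m \<theta>)}" unfolding Kc_def by auto
  finally show ?thesis by simp
qed

lemma EE_ind: "EE U p (indicator S) = measure_pmf.prob (PP U p) S"
  unfolding EE_def by simp

lemma hoeff_ge:
  assumes "0 \<le> p" "p \<le> 1" "m > 0" "e \<ge> 0"
  shows "measure_pmf.prob (binomial_pmf m p) {x. real x \<ge> m * p + e} \<le> exp (-2 * e\<^sup>2 / m)"
  using binomial_distribution.prob_ge[of p m e] assms by (simp add: binomial_distribution_def)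

lemma hoeff_le:
  assumes "0 \<le> p" "p \<le> 1" "m > 0" "e \<ge> 0"
  shows "measure_pmf.prob (binomial_pmf m p) {x. real x \<le> m * p - e} \<le> exp (-2 * e\<^sup>2 / m)"
  using binomial_distribution.prob_le[of p m e] assms by (simp add: binomial_distribution_def)


lemma exp_neg_le: "(y::real) \<ge> 4 \<Longrightarrow> exp (- y) \<le> 1/8"
proof -
  assume y: "y \<ge> 4"
  have "3 \<le> exp (2::real)" using exp_ge_add_one_self[of 2] by simp
  hence "9 \<le> exp (2::real) * exp 2" using mult_mono[of 3 "exp (2::real)" 3 "exp 2"] by simp
  also have "\<dots> = exp 4" by (simp add: exp_add[symmetric])
  also have "\<dots> \<le> exp y" using y by simp
  finally have "8 \<le> exp y" by simp
  thus ?thesis by (simp add: exp_minus field_simps)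
qed

theorem theorem7:
  shows "\<exists>c a b::real. c > 0 \<and> 0 < a \<and> a < b \<and> b \<le> 1 \<and>
     (\<forall>eps1 eps2. a \<le> eps1 \<longrightarrow> eps1 < eps2 \<longrightarrow> eps2 \<le> b \<longrightarrow>
        (\<exists>N::nat. \<forall>n \<ge> N. \<forall>A q. tolerant_unif_tester A q n eps1 eps2 \<longrightarrow>
            real q \<ge> c / (eps2 - eps1)^2))"
proof -
  define c :: real where "c = 1/150000"
  have main: "\<forall>eps1 eps2. (1/10::real) \<le> eps1 \<longrightarrow> eps1 < eps2 \<longrightarrow> eps2 \<le> 1/5 \<longrightarrow>
        (\<exists>N::nat. \<forall>n \<ge> N. \<forall>A q. tolerant_unif_tester A q n eps1 eps2 \<longrightarrow>
            real q \<ge> c / (eps2 - eps1)^2)"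
  proof (intro allI impI)
    fix eps1 eps2 :: real
    assume e1: "1/10 \<le> eps1" and e12: "eps1 < eps2" and e2: "eps2 \<le> 1/5"
    define \<delta> where "\<delta> = eps2 - eps1"
    have dpos: "\<delta> > 0" unfolding \<delta>_def using e12 by simp
    define N where "N = max 11 (nat \<lceil>1/\<delta>^2\<rceil>)"
    show "\<exists>N::nat. \<forall>n \<ge> N. \<forall>A q. tolerant_unif_tester A q n eps1 eps2 \<longrightarrow> real q \<ge> c / (eps2 - eps1)^2"
    proof (intro exI[of _ N] allI impI)
      fix n :: nat and A q
      assume nN: "N \<le> n" and tst: "tolerant_unif_tester A q n eps1 eps2"
      show "c / (eps2 - eps1)^2 \<le> real q"
      proof (rule ccontr)
        assume "\<not> c / (eps2 - eps1)^2 \<le> real q"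
        hence "real q < c / \<delta>^2" unfolding \<delta>_def by simp
        hence qsmall: "real q * \<delta>^2 < c" using dpos by (simp add: field_simps)
        have n11: "n \<ge> 11" using nN unfolding N_def by simp
        have "nat \<lceil>1/\<delta>^2\<rceil> \<le> n" using nN unfolding N_def by simp
        hence "1/\<delta>^2 \<le> real n" by linarith
        hence ndel: "real n * \<delta>^2 \<ge> 1" using dpos by (simp add: field_simps)
        have npos: "n > 0" using n11 by simp
        define m where "m = n div 2"
        define M where "M = real m"
        have m2: "2 * m \<le> n" "n \<le> 2 * m + 1" unfolding m_def by auto
        have M2: "2 * M \<le> real n" "real n \<le> 2 * M + 1" unfolding M_def using m2 by linarith+
        have Mn: "real n \<le> 11/5 * M" using M2 n11 by linarith
        have mpos: "m > 0" using m2 n11 by linarith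
        have Mpos: "M > 0" unfolding M_def using mpos by simp
        define p1 where "p1 = real n * (eps1 - \<delta>) / M"
        define p2 where "p2 = real n * (eps2 + \<delta>) / M"
        have a1: "0 \<le> eps1 - \<delta>" unfolding \<delta>_def using e1 e2 by linarith
        have a2: "1/10 \<le> eps2 + \<delta>" "eps2 + \<delta> \<le> 3/10" unfolding \<delta>_def using e1 e2 e12 by linarith+
        have hp1: "0 \<le> p1" unfolding p1_def using a1 Mpos by simp
        have "real n * (eps2 + \<delta>) \<le> real n * (3/10)" using a2 by (intro mult_left_mono) simp_all
        also have "\<dots> \<le> 2/3 * M" using Mn by simp
        finally have hp2u: "p2 \<le> 2/3" unfolding p2_def using Mpos by (simp add: divide_le_eq)
        have "M/5 = (2 * M) * (1/10)" by simp
        also have "\<dots> \<le> real n * (eps2 + \<delta>)" using M2 a2 Mpos by (intro mult_mono) simp_all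
        finally have hp2l: "1/5 \<le> p2" unfolding p2_def using Mpos by (simp add: le_divide_eq)
        have p12: "p2 - p1 = real n * (3 * \<delta>) / M"
        proof -
          have "p2 - p1 = (real n * (eps2 + \<delta>) - real n * (eps1 - \<delta>)) / M"
            unfolding p1_def p2_def by (rule diff_divide_distrib[symmetric])
          also have "real n * (eps2 + \<delta>) - real n * (eps1 - \<delta>) = real n * (3 * \<delta>)"
            unfolding \<delta>_def by (simp add: algebra_simps)
          finally show ?thesis .
        qed
        have "real n * (3 * \<delta>) \<le> 11/5 * M * (3 * \<delta>)" using Mn dpos by (intro mult_right_mono) simp_all
        hence d7: "p2 - p1 \<le> 7 * \<delta>" unfolding p12 using Mpos dpos by (simp add: divide_le_eq)
        have d0: "0 \<le> p2 - p1" unfolding p12 using Mpos dpos by simp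
        have hp1u: "p1 \<le> 1" using d0 hp2u by linarith
        have p2lt: "0 < p2" "p2 < 1" using hp2l hp2u by linarith+
        define chi where "chi = (p1 - p2)^2/(p2*(1-p2))"
        have KKe: "KK p1 p2 = 1 + chi" unfolding chi_def by (rule KK_eq[OF p2lt])
        have chi0: "chi \<ge> 0" unfolding chi_def using p2lt by simp
        have num: "(p1 - p2)^2 \<le> (7*\<delta>)^2"
        proof -
          have "(p1 - p2)^2 = (p2 - p1)^2" by (rule power2_commute)
          also have "\<dots> \<le> (7*\<delta>)^2" using d7 d0 by (rule power_mono)
          finally show ?thesis .
        qed
        have den: "1/15 \<le> p2*(1-p2)"
        proof -
          have "1/5 * (1/3) \<le> p2*(1-p2)" using hp2l hp2u by (intro mult_mono) simp_all
          thus ?thesis by simp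
        qed
        have "chi \<le> (7*\<delta>)^2 / (1/15)" unfolding chi_def
          by (rule frac_le) (use num den in simp_all)
        hence chib: "chi \<le> 735 * \<delta>^2" by (simp add: power_mult_distrib)
        have qchi: "real q * chi \<le> 1/200"
        proof -
          have "real q * chi \<le> real q * (735 * \<delta>^2)" using chib by (intro mult_left_mono) simp_all
          also have "\<dots> = 735 * (real q * \<delta>^2)" by simp
          also have "\<dots> \<le> 735 * c" using qsmall by simp
          finally show ?thesis unfolding c_def by simp
        qed
        have qchi0: "real q * chi \<ge> 0" using chi0 by simp
        have "KK p1 p2 ^ q \<le> exp chi ^ q" unfolding KKe
          using chi0 exp_ge_add_one_self[of chi] by (intro power_mono) simp_all
        also have "\<dots> = exp (real q * chi)" by (simp add: exp_of_nat_mult)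
        also have "\<dots> \<le> 1 + 2 * (real q * chi)"
          using exp_bound_lemma[of "real q * chi"] qchi qchi0 by simp
        finally have KKq: "KK p1 p2 ^ q - 1 \<le> 1/100" using qchi by simp
        interpret L: LB m "DD n" "{1..n}" "{0, 1/real n, 2/real n}" "coordf n" p1 p2 "1/10" A
          using LB_inst[OF npos hp1 hp1u p2lt, of "1/10"] unfolding m_def by simp
        define E1 where "E1 = EE {..<m} p1 (\<lambda>\<theta>. accept_prob A q (DD n \<theta>))"
        define E2 where "E2 = EE {..<m} p2 (\<lambda>\<theta>. accept_prob A q (DD n \<theta>))"
        have diff: "\<bar>E1 - E2\<bar> \<le> 1/10"
        proof -
          have "\<bar>E1 - E2\<bar> \<le> (KK p1 p2 ^ q - 1)/(2*(1/10)) + (1/10)/2"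
            using L.main0 unfolding E1_def E2_def L.Acc_eq .
          also have "\<dots> \<le> (1/100)/(2*(1/10)) + (1/10)/2" using KKq by (intro add_mono divide_right_mono) simp_all
          finally show ?thesis by simp
        qed
        have dist: "is_dist_on n (DD n \<theta>)" for \<theta> unfolding is_dist_on_def by (rule set_DD[OF npos])
        have acc01: "0 \<le> accept_prob A q (DD n \<theta>)" "accept_prob A q (DD n \<theta>) \<le> 1" for \<theta>
          unfolding accept_prob_def by (simp_all add: pmf_le_1)
        have dtvK: "dtv n (DD n \<theta>) (unif n) = Kc m \<theta> / n" for \<theta> unfolding m_def by (rule dtv_DD[OF npos])
        define S1 where "S1 = {\<theta>. \<not> (real (Kc m \<theta>) / n \<le> eps1)}"
        have pw1: "2/3 - 2/3 * indicator S1 \<theta> \<le> accept_prob A q (DD n \<theta>)" for \<theta>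
        proof (cases "\<theta> \<in> S1")
          case True thus ?thesis using acc01[of \<theta>] by simp
        next
          case False
          hence "dtv n (DD n \<theta>) (unif n) \<le> eps1" unfolding S1_def dtvK by simp
          hence "accept_prob A q (DD n \<theta>) \<ge> 2/3" using tst dist[of \<theta>] unfolding tolerant_unif_tester_def by blast
          thus ?thesis using False by simp
        qed
        have mp1: "M * p1 = real n * (eps1 - \<delta>)" unfolding p1_def using Mpos by simp
        have PS1: "measure_pmf.prob (PP {..<m} p1) S1 \<le> 1/8"
        proof -
          have "measure_pmf.prob (PP {..<m} p1) S1 = measure_pmf.prob (binomial_pmf m p1) {x. \<not> (real x / n \<le> eps1)}"
            unfolding S1_def by (rule prob_Kc[OF hp1 hp1u])
          also have "\<dots> \<le> measure_pmf.prob (binomial_pmf m p1) {x. real x \<ge> m * p1 + real n * \<delta>}"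
          proof (rule measure_pmf.finite_measure_mono)
            show "{x. \<not> real x / real n \<le> eps1} \<subseteq> {x. real m * p1 + real n * \<delta> \<le> real x}"
            proof
              fix x assume "x \<in> {x. \<not> real x / real n \<le> eps1}"
              hence "real n * eps1 < real x" using npos by (simp add: field_simps)
              moreover have "real m * p1 + real n * \<delta> = real n * eps1" using mp1 unfolding M_def by (simp add: algebra_simps)
              ultimately show "x \<in> {x. real m * p1 + real n * \<delta> \<le> real x}" by simp
            qed
          qed simp
          also have "\<dots> \<le> exp (-2 * (real n * \<delta>)\<^sup>2 / m)"
            by (rule hoeff_ge) (use hp1 hp1u mpos dpos in simp_all)
          also have "\<dots> \<le> 1/8"
          proof -
            have "2 * (real n * \<delta>)\<^sup>2 / M \<ge> 4"
            proof -
              have "2 * real n * 1 \<le> 2 * real n * (real n * \<delta>^2)" using ndel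
                by (intro mult_left_mono) simp_all
              hence "4 * M \<le> 2 * real n * (real n * \<delta>^2)" using M2 by linarith
              moreover have "real n * (real n * \<delta>^2) = \<delta>^2 * (real n)^2" by (simp add: power2_eq_square)
              ultimately show ?thesis using Mpos by (simp add: le_divide_eq power_mult_distrib algebra_simps)
            qed
            hence "-2 * (real n * \<delta>)\<^sup>2 / m = - (2 * (real n * \<delta>)\<^sup>2 / M) \<and> 2 * (real n * \<delta>)\<^sup>2 / M \<ge> 4"
              unfolding M_def by simp
            thus ?thesis using exp_neg_le by metis
          qed
          finally show ?thesis .
        qed
        have E1lb: "E1 \<ge> 7/12"
        proof -
          have "EE {..<m} p1 (\<lambda>\<theta>. 2/3 - 2/3 * indicator S1 \<theta>) \<le> E1"
            unfolding E1_def by (rule EE_mono) (simp, rule pw1)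
          moreover have "EE {..<m} p1 (\<lambda>\<theta>. 2/3 - 2/3 * indicator S1 \<theta>) = 2/3 - 2/3 * measure_pmf.prob (PP {..<m} p1) S1"
          proof -
            have "EE {..<m} p1 (\<lambda>\<theta>. 2/3 - 2/3 * indicator S1 \<theta>) = EE {..<m} p1 (\<lambda>\<theta>. 2/3) - EE {..<m} p1 (\<lambda>\<theta>. 2/3 * indicator S1 \<theta>)"
              by (rule EE_diff) simp
            also have "\<dots> = 2/3 - 2/3 * measure_pmf.prob (PP {..<m} p1) S1"
              by (simp only: EE_const EE_cmult EE_ind)
            finally show ?thesis .
          qed
          ultimately show ?thesis using PS1 by simp
        qed
        define S2 where "S2 = {\<theta>. real (Kc m \<theta>) / n < eps2}"
        have pw2: "accept_prob A q (DD n \<theta>) \<le> 1/3 + indicator S2 \<theta>" for \<theta>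
        proof (cases "\<theta> \<in> S2")
          case True thus ?thesis using acc01[of \<theta>] by simp
        next
          case False
          hence "dtv n (DD n \<theta>) (unif n) \<ge> eps2" unfolding S2_def dtvK by simp
          hence "1 - accept_prob A q (DD n \<theta>) \<ge> 2/3" using tst dist[of \<theta>] unfolding tolerant_unif_tester_def by blast
          thus ?thesis using False by simp
        qed
        have mp2: "M * p2 = real n * (eps2 + \<delta>)" unfolding p2_def using Mpos by simp
        have PS2: "measure_pmf.prob (PP {..<m} p2) S2 \<le> 1/8"
        proof -
          have "measure_pmf.prob (PP {..<m} p2) S2 = measure_pmf.prob (binomial_pmf m p2) {x. real x / n < eps2}"
            unfolding S2_def by (rule prob_Kc) (use p2lt in simp_all)
          also have "\<dots> \<le> measure_pmf.prob (binomial_pmf m p2) {x. real x \<le> m * p2 - real n * \<delta>}"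
          proof (rule measure_pmf.finite_measure_mono)
            show "{x. real x / real n < eps2} \<subseteq> {x. real x \<le> real m * p2 - real n * \<delta>}"
            proof
              fix x assume "x \<in> {x. real x / real n < eps2}"
              hence "real x < real n * eps2" using npos by (simp add: field_simps)
              moreover have "real m * p2 - real n * \<delta> = real n * eps2" using mp2 unfolding M_def by (simp add: algebra_simps)
              ultimately show "x \<in> {x. real x \<le> real m * p2 - real n * \<delta>}" by simp
            qed
          qed simp
          also have "\<dots> \<le> exp (-2 * (real n * \<delta>)\<^sup>2 / m)"
            by (rule hoeff_le) (use p2lt mpos dpos in simp_all)
          also have "\<dots> \<le> 1/8"
          proof -
            have "2 * (real n * \<delta>)\<^sup>2 / M \<ge> 4"
            proof -
              have "2 * real n * 1 \<le> 2 * real n * (real n * \<delta>^2)" using ndel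
                by (intro mult_left_mono) simp_all
              hence "4 * M \<le> 2 * real n * (real n * \<delta>^2)" using M2 by linarith
              moreover have "real n * (real n * \<delta>^2) = \<delta>^2 * (real n)^2" by (simp add: power2_eq_square)
              ultimately show ?thesis using Mpos by (simp add: le_divide_eq power_mult_distrib algebra_simps)
            qed
            hence "-2 * (real n * \<delta>)\<^sup>2 / m = - (2 * (real n * \<delta>)\<^sup>2 / M) \<and> 2 * (real n * \<delta>)\<^sup>2 / M \<ge> 4"
              unfolding M_def by simp
            thus ?thesis using exp_neg_le by metis
          qed
          finally show ?thesis .
        qed
        have E2ub: "E2 \<le> 11/24"
        proof -
          have "E2 \<le> EE {..<m} p2 (\<lambda>\<theta>. 1/3 + indicator S2 \<theta>)"
            unfolding E2_def by (rule EE_mono) (simp, rule pw2)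
          moreover have "EE {..<m} p2 (\<lambda>\<theta>. 1/3 + indicator S2 \<theta>) = 1/3 + measure_pmf.prob (PP {..<m} p2) S2"
          proof -
            have "EE {..<m} p2 (\<lambda>\<theta>. 1/3 + indicator S2 \<theta>) = EE {..<m} p2 (\<lambda>\<theta>. 1/3) + EE {..<m} p2 (\<lambda>\<theta>. indicator S2 \<theta>)"
              by (rule EE_add) simp
            also have "\<dots> = 1/3 + measure_pmf.prob (PP {..<m} p2) S2"
              by (simp only: EE_const EE_ind)
            finally show ?thesis .
          qed
          ultimately show ?thesis using PS2 by simp
        qed
        show False using diff E1lb E2ub by linarith
      qed
    qed
  qed
  show ?thesis
    by (rule exI[of _ c], rule exI[of _ "1/10::real"], rule exI[of _ "1/5::real"]) (use main in \<open>simp add: c_def\<close>)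
qed

end
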